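(* Consider the following permutation model $\mathcal V$ (in $\mathsf{ZFA}$ with choice in the ground). The set of atoms is $A=\bigcup_{n\in\omega}P_n$, where $P_n=\{a_n,b_n,c_n\}$ are pairwise disjoint 3-element sets, each carrying the cyclic order $a_n\to b_n\to c_n\to a_n$. Let $G$ be the group of all permutations $\pi$ of $A$ such that $\pi[P_n]=P_n$ for all $n$ and $\pi$ preserves each cyclic ordering (i.e. $\pi\restriction P_n$ is a power of the 3-cycle $(a_n\,b_n\,c_n)$ for every $n$). Let $\mathcal V$ be the class of hereditarily symmetric sets with respect to finite supports. Let $\mathfrak m=|A|$. Then in $\mathcal V$: $$[\mathfrak m]^2<\mathfrak m^2<\mathrm{seq}^{1-1}(\mathfrak m)<\mathrm{fin}(\mathfrak m).$$
   Context: Permutation model: $\pi\in G$ acts on sets by $\pi x=\{\pi y:y\in x\}$; $\mathrm{Fix}_G(E)=\{\pi\in G:\pi a=a\ \forall a\in E\}$; a set $x$ is symmetric if for some finite $E\subseteq A$, every $\pi\in\mathrm{Fix}_G(E)$ satisfies $\pi x=x$; $\mathcal V$ is the class of hereditarily symmetric sets. For a set $M$: $M^2=M\times M$, $[M]^2$ = 2-element subsets, $\mathrm{seq}^{1-1}(M)$ = finite sequences without repetition, $\mathrm{fin}(M)$ = finite subsets; for $\mathfrak m=|M|$ the corresponding symbols denote cardinalities. $|X|<|Y|$ means an injection $X\to Y$ exists but no bijection. *)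

theory Defs
  imports Main "HOL-Library.Numeral_Type"
begin

text \<open>Atoms: the atom (n, i) with i in Z/3 stands for a_n, b_n, c_n (i = 0, 1, 2);
  P_n = {(n,0),(n,1),(n,2)} with cyclic order i -> i+1.\<close>
type_synonym atom = "nat \<times> 3"

definition Grp :: "(atom \<Rightarrow> atom) set" where
  "Grp = {\<pi>. \<exists>k :: nat \<Rightarrow> 3. \<forall>n i. \<pi> (n, i) = (n, i + k n)}"

definition Fix :: "atom set \<Rightarrow> (atom \<Rightarrow> atom) set" where
  "Fix E = {\<pi> \<in> Grp. \<forall>a\<in>E. \<pi> a = a}"

definition act_set :: "(atom \<Rightarrow> atom) \<Rightarrow> atom set \<Rightarrow> atom set" where
  "act_set \<pi> x = \<pi> ` x"

definition act_pair :: "(atom \<Rightarrow> atom) \<Rightarrow> atom \<times> atom \<Rightarrow> atom \<times> atom" where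
  "act_pair \<pi> p = (\<pi> (fst p), \<pi> (snd p))"

definition act_list :: "(atom \<Rightarrow> atom) \<Rightarrow> atom list \<Rightarrow> atom list" where
  "act_list \<pi> xs = map \<pi> xs"

text \<open>A function f : X -> Y (as a set of pairs) is symmetric, i.e. lies in the
  permutation model, iff it has a finite support E: every pi in Fix E satisfies
  pi f = f, i.e. f (pi x) = pi (f x) for x in X.\<close>
definition symmetric_map ::
  "((atom \<Rightarrow> atom) \<Rightarrow> 'x \<Rightarrow> 'x) \<Rightarrow> ((atom \<Rightarrow> atom) \<Rightarrow> 'y \<Rightarrow> 'y) \<Rightarrow> 'x set \<Rightarrow> ('x \<Rightarrow> 'y) \<Rightarrow> bool" where
  "symmetric_map actX actY X f \<longleftrightarrow>
     (\<exists>E. finite E \<and> (\<forall>\<pi>\<in>Fix E. \<forall>x\<in>X. f (actX \<pi> x) = actY \<pi> (f x)))"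

definition V_le ::
  "'x set \<Rightarrow> ((atom \<Rightarrow> atom) \<Rightarrow> 'x \<Rightarrow> 'x) \<Rightarrow> 'y set \<Rightarrow> ((atom \<Rightarrow> atom) \<Rightarrow> 'y \<Rightarrow> 'y) \<Rightarrow> bool" where
  "V_le X actX Y actY \<longleftrightarrow>
     (\<exists>f. inj_on f X \<and> f ` X \<subseteq> Y \<and> symmetric_map actX actY X f)"

definition V_eqpoll ::
  "'x set \<Rightarrow> ((atom \<Rightarrow> atom) \<Rightarrow> 'x \<Rightarrow> 'x) \<Rightarrow> 'y set \<Rightarrow> ((atom \<Rightarrow> atom) \<Rightarrow> 'y \<Rightarrow> 'y) \<Rightarrow> bool" where
  "V_eqpoll X actX Y actY \<longleftrightarrow>
     (\<exists>f. bij_betw f X Y \<and> symmetric_map actX actY X f)"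

definition V_less ::
  "'x set \<Rightarrow> ((atom \<Rightarrow> atom) \<Rightarrow> 'x \<Rightarrow> 'x) \<Rightarrow> 'y set \<Rightarrow> ((atom \<Rightarrow> atom) \<Rightarrow> 'y \<Rightarrow> 'y) \<Rightarrow> bool" where
  "V_less X actX Y actY \<longleftrightarrow> V_le X actX Y actY \<and> \<not> V_eqpoll X actX Y actY"

end

theory Submission
  imports Defs "HOL-Library.Countable" "HOL-Library.Nat_Bijection"
begin



lemma ex3: "(x::3) = 0 \<or> x = 1 \<or> x = 2"
proof (cases x)
  case (of_int z)
  then have "z = 0 \<or> z = 1 \<or> z = 2" by auto
  then show ?thesis using of_int by auto
qed

definition sh :: "(nat \<Rightarrow> 3) \<Rightarrow> atom \<Rightarrow> atom" where
  "sh k a = (fst a, snd a + k (fst a))"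

lemma fst_sh[simp]: "fst (sh k a) = fst a" and snd_sh[simp]: "snd (sh k a) = snd a + k (fst a)"
  by (simp_all add: sh_def)

lemma Grp_sh: "\<pi> \<in> Grp \<Longrightarrow> \<exists>k. \<pi> = sh k"
  unfolding Grp_def sh_def by (auto intro!: ext)

lemma sh_Grp: "sh k \<in> Grp"
  unfolding Grp_def sh_def by auto

lemma Fix_sh: "\<pi> \<in> Fix E \<Longrightarrow> \<exists>k. \<pi> = sh k"
  unfolding Fix_def using Grp_sh by auto

lemma inj_sh: "inj (sh k)"
  unfolding inj_def sh_def by (auto simp: prod_eq_iff)

lemma sh_Fix: "(\<And>j. j \<in> fst ` E \<Longrightarrow> k j = 0) \<Longrightarrow> sh k \<in> Fix E"
  unfolding Fix_def using sh_Grp by (auto simp: sh_def)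

definition rot :: "nat \<Rightarrow> atom \<Rightarrow> atom" where
  "rot n = sh (\<lambda>m. if m = n then 1 else 0)"

lemma rot_Fix: "n \<notin> fst ` E \<Longrightarrow> rot n \<in> Fix E"
  unfolding rot_def by (rule sh_Fix) auto

lemma rot_moves: "fst a = n \<Longrightarrow> rot n a \<noteq> a"
  unfolding rot_def by (auto simp: prod_eq_iff)

lemma rot_fix: "fst a \<noteq> n \<Longrightarrow> rot n a = a"
  unfolding rot_def by (auto simp: prod_eq_iff)

lemma sh_block: "sh k ` ({c} \<times> UNIV) = {c} \<times> UNIV"
proof
  show "{c} \<times> UNIV \<subseteq> sh k ` ({c} \<times> UNIV)"
  proof
    fix x assume "x \<in> ({c}::nat set) \<times> (UNIV :: 3 set)"
    then have "x = sh k (c, snd x - k c)" by (auto simp: prod_eq_iff)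
    then show "x \<in> sh k ` ({c} \<times> UNIV)" by auto
  qed
qed (auto simp: sh_def)

lemma rot_block: "rot n ` ({c} \<times> UNIV) = {c} \<times> UNIV"
  unfolding rot_def by (rule sh_block)

lemma fresh3: "finite (S::nat set) \<Longrightarrow> \<exists>M. M \<notin> S \<and> M+1 \<notin> S \<and> M+2 \<notin> S"
proof -
  assume "finite S"
  then obtain M where "\<forall>x\<in>S. x < M" using finite_nat_set_iff_bounded by blast
  then show ?thesis by (intro exI[of _ M]) auto
qed


definition okp :: "atom \<times> atom \<Rightarrow> bool" where
  "okp p = (fst (fst p) < fst (snd p) \<or> (fst (fst p) = fst (snd p) \<and> snd (snd p) = snd (fst p) + 1))"

definition g1 :: "atom set \<Rightarrow> atom \<times> atom" where
  "g1 s = (THE p. okp p \<and> {fst p, snd p} = s)"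

lemma okp_ex1: assumes "card s = 2" shows "\<exists>!p. okp p \<and> {fst p, snd p} = s"
proof -
  obtain x y where s: "s = {x, y}" and xy: "x \<noteq> y" using assms unfolding card_2_iff by blast
  have ex: "okp (x,y) \<or> okp (y,x)"
  proof (cases "fst x = fst y")
    case True
    then have "snd x \<noteq> snd y" using xy by (auto simp: prod_eq_iff)
    then have "snd y = snd x + 1 \<or> snd x = snd y + 1"
      using ex3[of "snd x"] ex3[of "snd y"] by auto
    then show ?thesis using True by (auto simp: okp_def)
  next
    case False
    then show ?thesis by (auto simp: okp_def)
  qed
  have notboth: "\<not> (okp (x,y) \<and> okp (y,x))"
  proof
    assume "okp (x,y) \<and> okp (y,x)"
    then have "fst x = fst y" "snd y = snd x + 1" "snd x = snd y + 1" by (auto simp: okp_def)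
    then have "snd x + 1 + 1 = snd x" by simp
    then show False using ex3[of "snd x"] by auto
  qed
  show ?thesis
  proof (rule ex_ex1I)
    show "\<exists>p. okp p \<and> {fst p, snd p} = s"
    proof (cases "okp (x,y)")
      case True
      then show ?thesis using s by (intro exI[of _ "(x,y)"]) simp
    next
      case False
      then have "okp (y,x)" using ex by simp
      then show ?thesis using s by (intro exI[of _ "(y,x)"]) (simp add: insert_commute)
    qed
  next
    fix p q assume "okp p \<and> {fst p, snd p} = s" "okp q \<and> {fst q, snd q} = s"
    then show "p = q" using notboth xy unfolding s
      by (cases p; cases q) (auto simp: doubleton_eq_iff)
  qed
qed

lemma g1_prop: "card s = 2 \<Longrightarrow> okp (g1 s) \<and> {fst (g1 s), snd (g1 s)} = s"
  unfolding g1_def by (rule theI', rule okp_ex1)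

lemma okp_sh: "okp (sh k a, sh k b) = okp (a, b)"
  by (auto simp: okp_def)

lemma g1_equiv: assumes "card s = 2" shows "g1 (sh k ` s) = act_pair (sh k) (g1 s)"
proof -
  have "card (sh k ` s) = 2" using assms card_image[OF inj_on_subset[OF inj_sh subset_UNIV]] by simp
  then have ex1: "\<exists>!p. okp p \<and> {fst p, snd p} = sh k ` s" by (rule okp_ex1)
  have p: "okp (g1 s)" "{fst (g1 s), snd (g1 s)} = s" using g1_prop[OF assms] by blast+
  have img2: "\<And>A a b. A = {a, b} \<Longrightarrow> sh k ` A = {sh k a, sh k b}" by simp
  have "sh k ` s = {sh k (fst (g1 s)), sh k (snd (g1 s))}" by (rule img2) (rule p(2)[symmetric])
  then have pr: "okp (act_pair (sh k) (g1 s)) \<and> {fst (act_pair (sh k) (g1 s)), snd (act_pair (sh k) (g1 s))} = sh k ` s"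
    using p(1) okp_sh[of k "fst (g1 s)" "snd (g1 s)"] by (simp add: act_pair_def)
  show ?thesis unfolding g1_def[of "sh k ` s"] by (rule the1_equality[OF ex1 pr])
qed

lemma partA: "V_le {x :: atom set. card x = 2} act_set (UNIV :: (atom \<times> atom) set) act_pair"
  unfolding V_le_def
proof (intro exI conjI)
  show "inj_on g1 {x. card x = 2}"
  proof (rule inj_onI)
    fix x y assume "x \<in> {x :: atom set. card x = 2}" "y \<in> {x :: atom set. card x = 2}" "g1 x = g1 y"
    then have "{fst (g1 x), snd (g1 x)} = x" "{fst (g1 y), snd (g1 y)} = y" using g1_prop by blast+
    then show "x = y" using \<open>g1 x = g1 y\<close> by metis
  qed
  show "g1 ` {x. card x = 2} \<subseteq> UNIV" by simp
  show "symmetric_map act_set act_pair {x. card x = 2} g1"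
    unfolding symmetric_map_def
    by (rule exI[of _ "{}"]) (auto simp: act_set_def dest!: Fix_sh intro: g1_equiv)
qed


lemma partB: "\<not> V_eqpoll {x :: atom set. card x = 2} act_set (UNIV :: (atom \<times> atom) set) act_pair"
proof
  assume "V_eqpoll {x :: atom set. card x = 2} act_set (UNIV :: (atom \<times> atom) set) act_pair"
  then obtain f E where bij: "bij_betw f {x :: atom set. card x = 2} UNIV" and fin: "finite E"
    and eq: "\<And>\<pi> s. \<pi> \<in> Fix E \<Longrightarrow> card s = 2 \<Longrightarrow> f (\<pi> ` s) = act_pair \<pi> (f s)"
    unfolding V_eqpoll_def symmetric_map_def act_set_def by fastforce
  have key: "\<exists>x\<in>s. fst x = n'" if "card s = 2" "n' \<notin> fst ` E"
    "fst (fst (f s)) = n' \<or> fst (snd (f s)) = n'" for s n'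
  proof (rule ccontr)
    assume "\<not> (\<exists>x\<in>s. fst x = n')"
    then have "rot n' ` s = s" using rot_fix by (simp add: image_cong)
    then have "f s = act_pair (rot n') (f s)" using eq[OF rot_Fix[OF that(2)] that(1)] by simp
    then have "rot n' (fst (f s)) = fst (f s)" "rot n' (snd (f s)) = snd (f s)"
      by (metis act_pair_def fst_conv snd_conv)+
    then show False using that(3) rot_moves by blast
  qed
  have two: "\<exists>x y. s = {x, y} \<and> fst x = n \<and> fst y = m"
    if pr: "card s = 2" "n \<notin> fst ` E" "m \<notin> fst ` E" "n \<noteq> m"
      "fst (fst (f s)) = n" "fst (snd (f s)) = m" for s n m
  proof -
    obtain x where x: "x \<in> s" "fst x = n" using key[OF pr(1,2)] pr(5) by blast
    obtain y where y: "y \<in> s" "fst y = m" using key[OF pr(1,3)] pr(6) by blast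
    have "x \<noteq> y" using x y pr(4) by auto
    have "finite s" using pr(1) card.infinite by fastforce
    moreover have "{x,y} \<subseteq> s" using x y by auto
    moreover have "card {x,y} = card s" using \<open>x \<noteq> y\<close> pr(1) by simp
    ultimately have "s = {x, y}" using card_subset_eq by blast
    then show ?thesis using x y by blast
  qed
  obtain M where M: "M \<notin> fst ` E" "M+1 \<notin> fst ` E" using fresh3[of "fst ` E"] fin by blast
  define n where "n = M"
  define m where "m = M + 1"
  have nm: "n \<notin> fst ` E" "m \<notin> fst ` E" "n \<noteq> m" using M by (auto simp: n_def m_def)
  have "((n,0),(m,0)) \<in> f ` {x. card x = 2}" using bij_betw_imp_surj_on[OF bij] by simp
  then obtain s where s: "card s = 2" "f s = ((n,0),(m,0))" by auto
  have "((m,0),(n,0)) \<in> f ` {x. card x = 2}" using bij_betw_imp_surj_on[OF bij] by simp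
  then obtain t where t: "card t = 2" "f t = ((m,0),(n,0))" by auto
  obtain x y where xy: "s = {x,y}" "fst x = n" "fst y = m" using two[OF s(1) nm] s(2) by auto
  obtain x' y' where xy': "t = {x',y'}" "fst x' = m" "fst y' = n"
    using two[OF t(1) nm(2,1)] nm(3) t(2) by auto
  define k where "k = (\<lambda>j. if j = n then snd y' - snd x else if j = m then snd x' - snd y else 0)"
  have piF: "sh k \<in> Fix E" using nm by (intro sh_Fix) (auto simp: k_def)
  have "sh k x = y'" using xy(2) xy'(3) by (simp add: sh_def k_def prod_eq_iff)
  moreover have "sh k y = x'" using xy(3) xy'(2) nm(3) by (simp add: sh_def k_def prod_eq_iff)
  ultimately have "sh k ` s = t" using xy(1) xy'(1) by auto
  then have "f t = act_pair (sh k) (f s)" using eq[OF piF s(1)] by simp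
  then have "fst (fst (f t)) = n" using s(2) by (simp add: act_pair_def)
  then show False using t(2) nm(3) by simp
qed


definition h2 :: "atom \<times> atom \<Rightarrow> atom list" where
  "h2 p = (if fst p = snd p then [fst p] else [fst p, snd p])"

lemma partC: "V_le (UNIV :: (atom \<times> atom) set) act_pair {xs :: atom list. distinct xs} act_list"
  unfolding V_le_def
proof (intro exI conjI)
  show "inj_on h2 UNIV" by (rule inj_onI) (auto simp: h2_def prod_eq_iff split: if_splits)
  show "h2 ` UNIV \<subseteq> {xs. distinct xs}" by (auto simp: h2_def)
  show "symmetric_map act_pair act_list UNIV h2"
    unfolding symmetric_map_def
  proof (rule exI[of _ "{}"], clarsimp)
    fix \<pi> a b assume "\<pi> \<in> Fix {}"
    then obtain k where "\<pi> = sh k" using Fix_sh by blast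
    then show "h2 (act_pair \<pi> (a, b)) = act_list \<pi> (h2 (a, b))"
      using inj_sh[of k] by (auto simp: h2_def act_pair_def act_list_def dest: injD)
  qed
qed


lemma partD: "\<not> V_eqpoll (UNIV :: (atom \<times> atom) set) act_pair {xs :: atom list. distinct xs} act_list"
proof
  assume "V_eqpoll (UNIV :: (atom \<times> atom) set) act_pair {xs :: atom list. distinct xs} act_list"
  then obtain f E where bij: "bij_betw f (UNIV :: (atom \<times> atom) set) {xs. distinct xs}" and fin: "finite E"
    and eq: "\<And>\<pi> p. \<pi> \<in> Fix E \<Longrightarrow> f (act_pair \<pi> p) = map \<pi> (f p)"
    unfolding V_eqpoll_def symmetric_map_def act_list_def by fastforce
  have key: "fst (fst p) = n' \<or> fst (snd p) = n'" if "n' \<notin> fst ` E" "n' \<in> fst ` set (f p)" for p n'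
  proof (rule ccontr)
    assume "\<not> (fst (fst p) = n' \<or> fst (snd p) = n')"
    then have "act_pair (rot n') p = p" using rot_fix by (simp add: act_pair_def)
    then have "map (rot n') (f p) = f p" using eq[OF rot_Fix[OF that(1)], of p] by simp
    then have "\<forall>x\<in>set (f p). rot n' x = x" using map_eq_conv[of "rot n'" "f p" "\<lambda>x. x"] by simp
    then show False using that(2) rot_moves by blast
  qed
  obtain M where M: "M \<notin> fst ` E" "M+1 \<notin> fst ` E" "M+2 \<notin> fst ` E" using fresh3[of "fst ` E"] fin by blast
  have "distinct [(M,0::3),(M+1,0),(M+2,0)]" by simp
  then have "[(M,0::3),(M+1,0),(M+2,0)] \<in> f ` UNIV" using bij_betw_imp_surj_on[OF bij] by simp
  then obtain p where p: "f p = [(M,0),(M+1,0),(M+2,0)]" by auto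
  have "fst (fst p) = M \<or> fst (snd p) = M" using key[OF M(1)] p by simp
  moreover have "fst (fst p) = M+1 \<or> fst (snd p) = M+1" using key[OF M(2)] p by simp
  moreover have "fst (fst p) = M+2 \<or> fst (snd p) = M+2" using key[OF M(3)] p by simp
  ultimately show False by arith
qed



definition anc :: "atom list \<Rightarrow> nat \<Rightarrow> 3" where
  "anc L n = snd (hd (filter (\<lambda>a. fst a = n) L))"

definition nrm :: "atom list \<Rightarrow> atom list" where
  "nrm L = map (\<lambda>a. (fst a, snd a - anc L (fst a))) L"

definition cnum :: "atom list \<Rightarrow> nat" where
  "cnum L = prod_encode (Suc (sum_list (map fst L)), to_nat (nrm L))"

definition enc :: "atom list \<Rightarrow> atom set" where
  "enc L = (\<lambda>n. (n, anc L n)) ` (fst ` set L) \<union> {cnum L} \<times> UNIV"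

lemma map_fst_nrm: "map fst (nrm L) = map fst L"
  by (simp add: nrm_def)

lemma cnum_gt: "x \<in> set L \<Longrightarrow> fst x < cnum L"
proof -
  assume "x \<in> set L"
  then have "fst x \<le> sum_list (map fst L)" by (simp add: member_le_sum_list)
  also have "\<dots> < Suc (sum_list (map fst L))" by simp
  also have "\<dots> \<le> cnum L" unfolding cnum_def by (rule le_prod_encode_1)
  finally show ?thesis .
qed

lemma cnum_eq: "cnum L = cnum L' \<Longrightarrow> nrm L = nrm L'"
  by (simp add: cnum_def)

lemma anc_map: assumes "n \<in> fst ` set L" shows "anc (map (sh k) L) n = anc L n + k n"
proof -
  have ne: "filter (\<lambda>a. fst a = n) L \<noteq> []" using assms by (auto simp: filter_empty_conv)
  have "filter (\<lambda>a. fst a = n) (map (sh k) L) = map (sh k) (filter (\<lambda>a. fst a = n) L)"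
    by (simp add: filter_map o_def)
  then have "anc (map (sh k) L) n = snd (sh k (hd (filter (\<lambda>a. fst a = n) L)))"
    using ne by (simp add: anc_def hd_map)
  moreover have "fst (hd (filter (\<lambda>a. fst a = n) L)) = n"
    using hd_in_set[OF ne] by simp
  ultimately show ?thesis by (simp add: anc_def)
qed

lemma nrm_map: "nrm (map (sh k) L) = nrm L"
  unfolding nrm_def map_map o_def
proof (rule map_cong[OF refl])
  fix a assume a: "a \<in> set L"
  then have "anc (map (sh k) L) (fst a) = anc L (fst a) + k (fst a)" by (intro anc_map) auto
  then show "(fst (sh k a), snd (sh k a) - anc (map (sh k) L) (fst (sh k a))) = (fst a, snd a - anc L (fst a))"
    by simp
qed

lemma cnum_map: "cnum (map (sh k) L) = cnum L"
  unfolding cnum_def by (simp add: nrm_map o_def)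

lemma enc_map: "enc (map (sh k) L) = sh k ` enc L"
proof -
  have "sh k ` ((\<lambda>n. (n, anc L n)) ` (fst ` set L)) = (\<lambda>n. (n, anc (map (sh k) L) n)) ` (fst ` set L)"
    unfolding image_image by (rule image_cong[OF refl]) (simp add: anc_map sh_def)
  moreover have "fst ` set (map (sh k) L) = fst ` set L" by (simp add: image_image)
  ultimately show ?thesis unfolding enc_def image_Un cnum_map sh_block by simp
qed

lemma enc_finite: "finite (enc L)"
  unfolding enc_def by simp

lemma enc_inj: assumes eq: "enc L = enc L'" shows "L = L'"
proof -
  have cL: "cnum L \<notin> fst ` set L" "cnum L' \<notin> fst ` set L'" using cnum_gt by fastforce+
  have cc: "cnum L = cnum L'"
  proof (rule ccontr)
    assume ne: "cnum L \<noteq> cnum L'"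
    have m: "(cnum L, i) \<in> enc L'" for i unfolding eq[symmetric] by (simp add: enc_def)
    have "anc L' (cnum L) = i" for i using m[of i] ne unfolding enc_def by auto
    then show False using zero_neq_one[where 'a=3] by metis
  qed
  then have nn: "nrm L = nrm L'" by (rule cnum_eq)
  have bl: "fst ` set L = fst ` set L'"
    using arg_cong[OF nn, of "\<lambda>xs. set (map fst xs)"] by (simp add: map_fst_nrm)
  have aa: "anc L n = anc L' n" if n: "n \<in> fst ` set L" for n
  proof -
    have "(n, anc L n) \<in> enc L" unfolding enc_def using n by blast
    then have "(n, anc L n) \<in> enc L'" using eq by simp
    moreover have "n \<noteq> cnum L'" using cL(1) cc n by metis
    ultimately obtain n' where "(n, anc L n) = (n', anc L' n')" unfolding enc_def by blast
    then show ?thesis by auto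
  qed
  have rec: "map (\<lambda>a. (fst a, snd a + anc X (fst a))) (nrm X) = X" for X
    unfolding nrm_def map_map o_def by (rule map_idI) simp
  have "map (\<lambda>a. (fst a, snd a + anc L (fst a))) (nrm L) = map (\<lambda>a. (fst a, snd a + anc L' (fst a))) (nrm L')"
    unfolding nn[symmetric]
  proof (rule map_cong[OF refl])
    fix a assume "a \<in> set (nrm L)"
    then have "fst a \<in> fst ` set L" using map_fst_nrm[of L] by (metis image_eqI list.set_map)
    then show "(fst a, snd a + anc L (fst a)) = (fst a, snd a + anc L' (fst a))" using aa by simp
  qed
  then show ?thesis unfolding rec .
qed

lemma partE: "V_le {xs :: atom list. distinct xs} act_list {x :: atom set. finite x} act_set"
  unfolding V_le_def
proof (intro exI conjI)
  show "inj_on enc {xs. distinct xs}" by (rule inj_onI) (rule enc_inj)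
  show "enc ` {xs. distinct xs} \<subseteq> {x. finite x}" using enc_finite by auto
  show "symmetric_map act_list act_set {xs. distinct xs} enc"
    unfolding symmetric_map_def
    by (rule exI[of _ "{}"]) (auto simp: act_set_def act_list_def enc_map dest!: Fix_sh)
qed

lemma partF: "\<not> V_eqpoll {xs :: atom list. distinct xs} act_list {x :: atom set. finite x} act_set"
proof
  assume "V_eqpoll {xs :: atom list. distinct xs} act_list {x :: atom set. finite x} act_set"
  then obtain f E where bij: "bij_betw f {xs :: atom list. distinct xs} {x. finite x}" and fin: "finite E"
    and eq: "\<And>\<pi> L. \<pi> \<in> Fix E \<Longrightarrow> distinct L \<Longrightarrow> f (map \<pi> L) = \<pi> ` (f L)"
    unfolding V_eqpoll_def symmetric_map_def act_list_def act_set_def by fastforce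
  have injf: "inj_on f {xs. distinct xs}" using bij by (rule bij_betw_imp_inj_on)
  define K where "K = fst ` E \<times> (UNIV :: 3 set)"
  have finK: "finite K" using fin by (simp add: K_def)
  have pre: "\<exists>L. distinct L \<and> f L = {m} \<times> UNIV" for m
  proof -
    have "{m} \<times> (UNIV :: 3 set) \<in> f ` {xs. distinct xs}" using bij_betw_imp_surj_on[OF bij] by simp
    then show ?thesis by auto
  qed
  define g where "g m = (SOME L. distinct L \<and> f L = {m} \<times> UNIV)" for m
  have g: "distinct (g m) \<and> f (g m) = {m} \<times> UNIV" for m
    unfolding g_def by (rule someI_ex[OF pre])
  have gK: "set (g m) \<subseteq> K" for m
  proof
    fix x assume x: "x \<in> set (g m)"
    show "x \<in> K"
    proof (rule ccontr)
      assume "x \<notin> K"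
      then have nE: "fst x \<notin> fst ` E" by (simp add: K_def mem_Times_iff)
      have ir: "inj (rot (fst x))" unfolding rot_def by (rule inj_sh)
      have d: "distinct (map (rot (fst x)) (g m))"
        using g[of m] by (simp add: distinct_map inj_on_subset[OF ir subset_UNIV])
      have "f (map (rot (fst x)) (g m)) = f (g m)"
        using eq[OF rot_Fix[OF nE], of "g m"] g[of m] rot_block by simp
      then have "map (rot (fst x)) (g m) = g m" using inj_onD[OF injf _ _ ] d g[of m] by simp
      then have "rot (fst x) x = x" using x map_eq_conv[of "rot (fst x)" "g m" "\<lambda>x. x"] by simp
      then show False using rot_moves by blast
    qed
  qed
  have "inj g"
  proof (rule injI)
    fix a b assume "g a = g b"
    then have "{a} \<times> (UNIV :: 3 set) = {b} \<times> UNIV" using g[of a] g[of b] by simp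
    then show "a = b" by auto
  qed
  moreover have "range g \<subseteq> {xs. set xs \<subseteq> K \<and> distinct xs}" using g gK by auto
  ultimately have "finite (UNIV :: nat set)"
    using finite_subset[OF _ finite_subset_distinct[OF finK]] finite_imageD by blast
  then show False by simp
qed


theorem mainTheorem11:
  shows "V_less {x :: atom set. card x = 2} act_set (UNIV :: (atom \<times> atom) set) act_pair
       \<and> V_less (UNIV :: (atom \<times> atom) set) act_pair {xs :: atom list. distinct xs} act_list
       \<and> V_less {xs :: atom list. distinct xs} act_list {x :: atom set. finite x} act_set"
  unfolding V_less_def using partA partB partC partD partE partF by blast

end
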